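(* Let $\mathcal{X}\subset\mathbb{R}^d$ be compact, $k$ a kernel with $k(x,y)\le1$ for all $x,y$, $\sigma>0$, and $f\in\mathcal{H}_k$. Run Algorithm 3 with observations $y_t=f(x_t)$ (i.e. $h=f$, $g=0$): $x_t\in\arg\max_{x\in\mathcal{X}}\widehat m_{t-1}(x)+\|f\|_{\mathcal{H}_k}\widehat\sigma_{t-1}(x)$, assuming maximizers exist and the points $x_1,\dots,x_T$ are pairwise distinct. Let $C_1=\frac{8}{\log(1+\sigma^{-2})}$. Then $$R_T\le\|f\|_{\mathcal{H}_k}\sqrt{TC_1\gamma_T}+2T\|f\|_{\mathcal{H}_k}\sigma,\qquad r_T\le\|f\|_{\mathcal{H}_k}\sqrt{\frac{C_1\gamma_T}{T}}+2\|f\|_{\mathcal{H}_k}\sigma.$$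
   Context: $\mathbf{k}_t(x)=[k(x,x_i)]_{i\le t}$, $\mathbf{K}_t=[k(x_i,x_j)]_{i,j\le t}$, $\mathbf{y}_t=[y_i]_{i\le t}$, $\widehat m_t(x)=\mathbf{k}_t(x)^T(\mathbf{K}_t+\sigma^2I)^{-1}\mathbf{y}_t$, $\widehat\sigma_t^2(x)=k(x,x)-\mathbf{k}_t(x)^T(\mathbf{K}_t+\sigma^2I)^{-1}\mathbf{k}_t(x)$, $\widehat m_0\equiv0$, $\widehat\sigma_0^2(x)=k(x,x)$. $x^*\in\arg\max_{\mathcal{X}}f$; $R_T=\sum_{t=1}^T(f(x^* )-f(x_t))$; $r_T=f(x^* )-\max_{t\le T}f(x_t)$; $\gamma_T=\max_{x_1,\dots,x_T\in\mathcal{X}}\frac12\log\det(\mathbf{I}_T+\sigma^{-2}\mathbf{K}_T)$. *)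

theory Defs
  imports "HOL-Analysis.Analysis" "Jordan_Normal_Form.Determinant"
begin

definition kernel_on :: "('a \<Rightarrow> 'a \<Rightarrow> real) \<Rightarrow> 'a set \<Rightarrow> bool" where
  "kernel_on k X \<longleftrightarrow> (\<forall>x\<in>X. \<forall>y\<in>X. k x y = k y x) \<and>
     (\<forall>ps :: (real \<times> 'a) list. set (map snd ps) \<subseteq> X \<longrightarrow>
        (\<Sum>i<length ps. \<Sum>j<length ps. fst (ps!i) * fst (ps!j) * k (snd (ps!i)) (snd (ps!j))) \<ge> 0)"

text \<open>Elements of the pre-RKHS span{k(.,x) : x in X} are represented by finite lists of
  (coefficient, centre) pairs.\<close>
definition pre_eval :: "('a \<Rightarrow> 'a \<Rightarrow> real) \<Rightarrow> (real \<times> 'a) list \<Rightarrow> 'a \<Rightarrow> real" where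
  "pre_eval k ps x = (\<Sum>i<length ps. fst (ps!i) * k x (snd (ps!i)))"

definition pre_norm_sq :: "('a \<Rightarrow> 'a \<Rightarrow> real) \<Rightarrow> (real \<times> 'a) list \<Rightarrow> real" where
  "pre_norm_sq k ps = (\<Sum>i<length ps. \<Sum>j<length ps. fst (ps!i) * fst (ps!j) * k (snd (ps!i)) (snd (ps!j)))"

definition pre_diff :: "(real \<times> 'a) list \<Rightarrow> (real \<times> 'a) list \<Rightarrow> (real \<times> 'a) list" where
  "pre_diff ps qs = ps @ map (\<lambda>(c, x). (- c, x)) qs"

definition rkhs_approx :: "('a \<Rightarrow> 'a \<Rightarrow> real) \<Rightarrow> 'a set \<Rightarrow> ('a \<Rightarrow> real) \<Rightarrow> (nat \<Rightarrow> (real \<times> 'a) list) \<Rightarrow> bool" where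
  "rkhs_approx k X f s \<longleftrightarrow> (\<forall>n. set (map snd (s n)) \<subseteq> X) \<and>
     (\<forall>e>0. \<exists>N. \<forall>m\<ge>N. \<forall>n\<ge>N. pre_norm_sq k (pre_diff (s m) (s n)) < e) \<and>
     (\<forall>x\<in>X. (\<lambda>n. pre_eval k (s n) x) \<longlonglongrightarrow> f x)"

definition in_rkhs :: "('a \<Rightarrow> 'a \<Rightarrow> real) \<Rightarrow> 'a set \<Rightarrow> ('a \<Rightarrow> real) \<Rightarrow> bool" where
  "in_rkhs k X f \<longleftrightarrow> (\<exists>s. rkhs_approx k X f s)"

definition rkhs_norm :: "('a \<Rightarrow> 'a \<Rightarrow> real) \<Rightarrow> 'a set \<Rightarrow> ('a \<Rightarrow> real) \<Rightarrow> real" where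
  "rkhs_norm k X f = lim (\<lambda>n. sqrt (pre_norm_sq k ((SOME s. rkhs_approx k X f s) n)))"

definition inv_mat :: "real mat \<Rightarrow> real mat" where
  "inv_mat A = (SOME B. B \<in> carrier_mat (dim_row A) (dim_row A) \<and>
      A * B = 1\<^sub>m (dim_row A) \<and> B * A = 1\<^sub>m (dim_row A))"

text \<open>Data: points xs 1, ..., xs t and observations ys 1, ..., ys t (1-indexed).\<close>
definition kvec :: "('a \<Rightarrow> 'a \<Rightarrow> real) \<Rightarrow> (nat \<Rightarrow> 'a) \<Rightarrow> nat \<Rightarrow> 'a \<Rightarrow> real vec" where
  "kvec k xs t x = vec t (\<lambda>i. k x (xs (Suc i)))"

definition Kmat :: "('a \<Rightarrow> 'a \<Rightarrow> real) \<Rightarrow> (nat \<Rightarrow> 'a) \<Rightarrow> nat \<Rightarrow> real mat" where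
  "Kmat k xs t = mat t t (\<lambda>(i, j). k (xs (Suc i)) (xs (Suc j)))"

definition yvec :: "(nat \<Rightarrow> real) \<Rightarrow> nat \<Rightarrow> real vec" where
  "yvec ys t = vec t (\<lambda>i. ys (Suc i))"

definition post_mean :: "('a \<Rightarrow> 'a \<Rightarrow> real) \<Rightarrow> real \<Rightarrow> (nat \<Rightarrow> 'a) \<Rightarrow> (nat \<Rightarrow> real) \<Rightarrow> nat \<Rightarrow> 'a \<Rightarrow> real" where
  "post_mean k \<sigma> xs ys t x =
     kvec k xs t x \<bullet> (inv_mat (Kmat k xs t + \<sigma>\<^sup>2 \<cdot>\<^sub>m 1\<^sub>m t) *\<^sub>v yvec ys t)"

definition post_var :: "('a \<Rightarrow> 'a \<Rightarrow> real) \<Rightarrow> real \<Rightarrow> (nat \<Rightarrow> 'a) \<Rightarrow> nat \<Rightarrow> 'a \<Rightarrow> real" where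
  "post_var k \<sigma> xs t x = k x x -
     kvec k xs t x \<bullet> (inv_mat (Kmat k xs t + \<sigma>\<^sup>2 \<cdot>\<^sub>m 1\<^sub>m t) *\<^sub>v kvec k xs t x)"

definition info_gain :: "('a \<Rightarrow> 'a \<Rightarrow> real) \<Rightarrow> real \<Rightarrow> 'a set \<Rightarrow> nat \<Rightarrow> real" where
  "info_gain k \<sigma> X T = (SUP xs \<in> {xs :: nat \<Rightarrow> 'a. \<forall>i\<in>{1..T}. xs i \<in> X}.
      1/2 * ln (det (1\<^sub>m T + (1 / \<sigma>\<^sup>2) \<cdot>\<^sub>m Kmat k xs T)))"

end

theory Submission imports Defs begin


definition ip :: "('a \<Rightarrow> 'a \<Rightarrow> real) \<Rightarrow> (real \<times> 'a) list \<Rightarrow> (real \<times> 'a) list \<Rightarrow> real" where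
  "ip k p q = (\<Sum>i<length p. \<Sum>j<length q. fst (p!i) * fst (q!j) * k (snd (p!i)) (snd (q!j)))"

definition scl :: "real \<Rightarrow> (real \<times> 'a) list \<Rightarrow> (real \<times> 'a) list" where
  "scl c p = map (\<lambda>(a, x). (c * a, x)) p"

lemma ip_Nil[simp]: "ip k [] q = 0" "ip k p [] = 0"
  by (simp_all add: ip_def)

lemma ip_Cons_left: "ip k (a # p) q = (\<Sum>j<length q. fst a * fst (q!j) * k (snd a) (snd (q!j))) + ip k p q"
  unfolding ip_def by (simp only: length_Cons sum.lessThan_Suc_shift) simp

lemma ip_Cons_right: "ip k p (a # q) = (\<Sum>i<length p. fst (p!i) * fst a * k (snd (p!i)) (snd a)) + ip k p q"
  unfolding ip_def by (simp only: length_Cons sum.lessThan_Suc_shift) (simp add: sum.distrib)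

lemma ip_append_left: "ip k (p @ q) r = ip k p r + ip k q r"
  by (induction p) (auto simp: ip_Cons_left)

lemma ip_append_right: "ip k r (p @ q) = ip k r p + ip k r q"
proof (induction p)
  case Nil then show ?case by simp
next
  case (Cons a p)
  have "ip k r ((a # p) @ q) = ip k r (a # (p @ q))" by simp
  also have "\<dots> = (\<Sum>i<length r. fst (r!i) * fst a * k (snd (r!i)) (snd a)) + ip k r (p @ q)"
    by (rule ip_Cons_right)
  finally show ?case using Cons by (simp add: ip_Cons_right)
qed

lemma ip_scl_left: "ip k (scl c p) q = c * ip k p q"
  unfolding ip_def scl_def by (simp add: sum_distrib_left case_prod_beta mult.assoc)

lemma ip_scl_right: "ip k p (scl c q) = c * ip k p q"
  unfolding ip_def scl_def by (simp add: sum_distrib_left case_prod_beta algebra_simps)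

lemma ip_sym:
  assumes "kernel_on k X" "set (map snd p) \<subseteq> X" "set (map snd q) \<subseteq> X"
  shows "ip k p q = ip k q p"
proof -
  have s: "k (snd (p!i)) (snd (q!j)) = k (snd (q!j)) (snd (p!i))" if "i < length p" "j < length q" for i j
    using assms that unfolding kernel_on_def by (auto dest!: nth_mem simp: subset_iff)
  show ?thesis unfolding ip_def
    by (subst sum.swap) (auto intro!: sum.cong simp: s mult.commute mult.left_commute)
qed

lemma ip_psd:
  assumes "kernel_on k X" "set (map snd p) \<subseteq> X"
  shows "ip k p p \<ge> 0"
  using assms unfolding kernel_on_def ip_def by blast

lemma pre_norm_sq_ip: "pre_norm_sq k p = ip k p p"
  unfolding pre_norm_sq_def ip_def ..

lemma pre_diff_scl: "pre_diff p q = p @ scl (-1) q"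
  unfolding pre_diff_def scl_def by auto

lemma set_scl[simp]: "snd ` set (scl c p) = snd ` set p"
  unfolding scl_def by (force simp: case_prod_beta image_iff)

lemma quad_nonneg_disc:
  fixes a b c :: real
  assumes "\<And>l. 0 \<le> a + 2 * b * l + c * l^2" "c \<ge> 0"
  shows "b^2 \<le> a * c"
proof (cases "c = 0")
  case True
  have "b = 0"
  proof (rule ccontr)
    assume "b \<noteq> 0"
    have "0 \<le> a + 2 * b * (- (a + 1) / (2 * b)) + c * (- (a + 1) / (2 * b))^2" by (rule assms(1))
    with True \<open>b \<noteq> 0\<close> show False by (simp add: field_simps)
  qed
  then show ?thesis using True by simp
next
  case False
  then have c: "c > 0" using assms(2) by simp
  have "0 \<le> a + 2 * b * (- b / c) + c * (- b / c)^2" by (rule assms(1))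
  also have "\<dots> = a - b^2 / c" using c by (simp add: field_simps power2_eq_square)
  finally have "b^2 / c \<le> a" by simp
  then show ?thesis using c by (simp add: field_simps mult.commute)
qed

lemma ip_CS:
  assumes "kernel_on k X" "set (map snd p) \<subseteq> X" "set (map snd q) \<subseteq> X"
  shows "(ip k p q)^2 \<le> ip k p p * ip k q q"
proof (rule quad_nonneg_disc)
  fix l
  have "0 \<le> ip k (p @ scl l q) (p @ scl l q)"
    by (rule ip_psd[OF assms(1)]) (use assms in auto)
  also have "\<dots> = ip k p p + 2 * ip k p q * l + ip k q q * l^2"
    using ip_sym[OF assms(1) assms(3) assms(2)]
    by (simp add: ip_append_left ip_append_right ip_scl_left ip_scl_right power2_eq_square algebra_simps)
  finally show "0 \<le> ip k p p + 2 * ip k p q * l + ip k q q * l^2" .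
  show "ip k q q \<ge> 0" by (rule ip_psd[OF assms(1) assms(3)])
qed

lemma ip_single_right:
  assumes "kernel_on k X" "set (map snd p) \<subseteq> X" "x \<in> X"
  shows "ip k p [(1, x)] = pre_eval k p x"
proof -
  have "k (snd (p!i)) x = k x (snd (p!i))" if "i < length p" for i
    using assms that unfolding kernel_on_def by (auto dest!: nth_mem simp: subset_iff)
  then show ?thesis unfolding ip_def pre_eval_def by (auto intro!: sum.cong)
qed

lemma norm_diff_ge:
  assumes "kernel_on k X" "set (map snd p) \<subseteq> X" "set (map snd q) \<subseteq> X"
  shows "\<bar>sqrt (pre_norm_sq k p) - sqrt (pre_norm_sq k q)\<bar> \<le> sqrt (pre_norm_sq k (pre_diff p q))"
proof -
  define a where "a = ip k p p"
  define b where "b = ip k q q"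
  define c where "c = ip k p q"
  have a: "a \<ge> 0" "b \<ge> 0" unfolding a_def b_def using ip_psd assms by blast+
  have cs: "c^2 \<le> a * b" unfolding a_def b_def c_def by (rule ip_CS[OF assms])
  have "\<bar>c\<bar> \<le> sqrt a * sqrt b"
    using cs a by (metis real_sqrt_abs real_sqrt_le_mono real_sqrt_mult)
  then have c: "c \<le> sqrt a * sqrt b" by simp
  have d: "pre_norm_sq k (pre_diff p q) = a - 2 * c + b"
    unfolding pre_diff_scl pre_norm_sq_ip a_def b_def c_def
    using ip_sym[OF assms(1) assms(3) assms(2)]
    by (simp add: ip_append_left ip_append_right ip_scl_left ip_scl_right)
  have "(sqrt a - sqrt b)^2 = a - 2 * (sqrt a * sqrt b) + b"
    using a by (simp add: power2_diff)
  also have "\<dots> \<le> a - 2 * c + b" using c by simp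
  finally have "(sqrt a - sqrt b)^2 \<le> pre_norm_sq k (pre_diff p q)" using d by simp
  then have "sqrt ((sqrt a - sqrt b)^2) \<le> sqrt (pre_norm_sq k (pre_diff p q))"
    by (rule real_sqrt_le_mono)
  then show ?thesis unfolding pre_norm_sq_ip a_def b_def by simp
qed



definition Amat :: "('a \<Rightarrow> 'a \<Rightarrow> real) \<Rightarrow> real \<Rightarrow> (nat \<Rightarrow> 'a) \<Rightarrow> nat \<Rightarrow> real mat" where
  "Amat k \<sigma> xs t = Kmat k xs t + \<sigma>\<^sup>2 \<cdot>\<^sub>m 1\<^sub>m t"

definition gl :: "(nat \<Rightarrow> 'a) \<Rightarrow> nat \<Rightarrow> real vec \<Rightarrow> (real \<times> 'a) list" where
  "gl xs t v = map (\<lambda>i. (v $ i, xs (Suc i))) [0..<t]"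

lemma Kmat_carrier[simp]: "Kmat k xs t \<in> carrier_mat t t"
  by (simp add: Kmat_def)
lemma Amat_carrier[simp]: "Amat k \<sigma> xs t \<in> carrier_mat t t"
  by (simp add: Amat_def)
lemma kvec_carrier[simp]: "kvec k xs t x \<in> carrier_vec t"
  by (simp add: kvec_def)
lemma yvec_carrier[simp]: "yvec ys t \<in> carrier_vec t"
  by (simp add: yvec_def)

lemma length_gl[simp]: "length (gl xs t v) = t"
  by (simp add: gl_def)
lemma nth_gl[simp]: "i < t \<Longrightarrow> gl xs t v ! i = (v $ i, xs (Suc i))"
  by (simp add: gl_def)
lemma set_gl: "\<forall>i\<in>{1..t}. xs i \<in> X \<Longrightarrow> set (map snd (gl xs t v)) \<subseteq> X"
  by (auto simp: gl_def)

lemma Kmat_mult_index: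
  assumes "w \<in> carrier_vec t" "i < t"
  shows "(Kmat k xs t *\<^sub>v w) $ i = (\<Sum>j<t. k (xs (Suc i)) (xs (Suc j)) * w $ j)"
  using assms by (simp add: Kmat_def scalar_prod_def Matrix.row_def atLeast0LessThan)

lemma ip_gl:
  assumes "v \<in> carrier_vec t" "w \<in> carrier_vec t"
  shows "ip k (gl xs t v) (gl xs t w) = v \<bullet> (Kmat k xs t *\<^sub>v w)"
proof -
  have "v \<bullet> (Kmat k xs t *\<^sub>v w) = (\<Sum>i<t. v $ i * (\<Sum>j<t. k (xs (Suc i)) (xs (Suc j)) * w $ j))"
    using assms by (simp add: scalar_prod_def atLeast0LessThan Kmat_def Matrix.row_def)
  then show ?thesis
    unfolding ip_def by (simp add: sum_distrib_left algebra_simps)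
qed

lemma ip_single_gl:
  assumes "w \<in> carrier_vec t"
  shows "ip k [(1, x)] (gl xs t w) = w \<bullet> kvec k xs t x"
  using assms unfolding ip_def by (simp add: kvec_def scalar_prod_def atLeast0LessThan mult.commute)

lemma scalar_self_nonneg: "(v :: real vec) \<bullet> v \<ge> 0"
  by (simp add: scalar_prod_def sum_nonneg)

lemma scalar_self_pos: 
  assumes "(v :: real vec) \<in> carrier_vec t" "v \<noteq> 0\<^sub>v t"
  shows "v \<bullet> (v :: real vec) > 0"
proof -
  have "\<exists>i<t. v $ i \<noteq> 0"
  proof (rule ccontr)
    assume "\<not> (\<exists>i<t. v $ i \<noteq> 0)"
    then have "v = 0\<^sub>v t" using assms(1) by (intro eq_vecI) auto
    with assms(2) show False by simp
  qed
  then obtain i where i: "i < t" "v $ i \<noteq> 0" by blast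
  have e: "v \<bullet> v = (\<Sum>j\<in>{0..<t}. v $ j * v $ j)" using assms by (simp add: scalar_prod_def)
  have "v $ i * v $ i \<le> (\<Sum>j\<in>{0..<t}. v $ j * v $ j)"
    by (rule member_le_sum) (use i in auto)
  then have "v $ i * v $ i \<le> v \<bullet> v" using e by simp
  moreover have "0 < v $ i * v $ i" using i(2)
    by (cases "v $ i > 0") (auto simp: mult_pos_pos mult_neg_neg)
  ultimately show ?thesis by linarith
qed

context
  fixes k :: "'a \<Rightarrow> 'a \<Rightarrow> real" and X :: "'a set" and \<sigma> :: real and xs :: "nat \<Rightarrow> 'a" and t :: nat
  assumes ker: "kernel_on k X" and sig: "\<sigma> > 0" and pts: "\<forall>i\<in>{1..t}. xs i \<in> X"
begin

lemma Amat_eq: "Amat k \<sigma> xs t = mat t t (\<lambda>(i,j). k (xs (Suc i)) (xs (Suc j)) + (if i = j then \<sigma>\<^sup>2 else 0))"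
  by (rule eq_matI) (auto simp: Amat_def Kmat_def)

lemma bilinA:
  assumes "v \<in> carrier_vec t" "w \<in> carrier_vec t"
  shows "v \<bullet> (Amat k \<sigma> xs t *\<^sub>v w) = v \<bullet> (Kmat k xs t *\<^sub>v w) + \<sigma>\<^sup>2 * (v \<bullet> w)"
proof -
  have "v \<bullet> (Amat k \<sigma> xs t *\<^sub>v w) = (\<Sum>i<t. v $ i * (\<Sum>j<t. (k (xs (Suc i)) (xs (Suc j)) + (if i = j then \<sigma>\<^sup>2 else 0)) * w $ j))"
    using assms unfolding Amat_eq by (simp add: scalar_prod_def atLeast0LessThan Matrix.row_def)
  also have "\<dots> = (\<Sum>i<t. v $ i * (\<Sum>j<t. k (xs (Suc i)) (xs (Suc j)) * w $ j)) + \<sigma>\<^sup>2 * (\<Sum>i<t. v $ i * w $ i)"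
  proof -
    have inner: "(\<Sum>j<t. (k (xs (Suc i)) (xs (Suc j)) + (if i = j then \<sigma>\<^sup>2 else 0)) * w $ j)
       = (\<Sum>j<t. k (xs (Suc i)) (xs (Suc j)) * w $ j) + \<sigma>\<^sup>2 * w $ i" if "i < t" for i
    proof -
      have "(\<Sum>j<t. (k (xs (Suc i)) (xs (Suc j)) + (if i = j then \<sigma>\<^sup>2 else 0)) * w $ j)
         = (\<Sum>j<t. k (xs (Suc i)) (xs (Suc j)) * w $ j + (if i = j then \<sigma>\<^sup>2 * w $ j else 0))"
        by (rule sum.cong) (auto simp: distrib_right)
      also have "\<dots> = (\<Sum>j<t. k (xs (Suc i)) (xs (Suc j)) * w $ j) + (\<Sum>j<t. if i = j then \<sigma>\<^sup>2 * w $ j else 0)"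
        by (rule sum.distrib)
      also have "(\<Sum>j<t. if i = j then \<sigma>\<^sup>2 * w $ j else 0) = \<sigma>\<^sup>2 * w $ i"
        using that by (simp add: sum.delta)
      finally show ?thesis .
    qed
    have "(\<Sum>i<t. v $ i * (\<Sum>j<t. (k (xs (Suc i)) (xs (Suc j)) + (if i = j then \<sigma>\<^sup>2 else 0)) * w $ j))
      = (\<Sum>i<t. v $ i * (\<Sum>j<t. k (xs (Suc i)) (xs (Suc j)) * w $ j) + \<sigma>\<^sup>2 * (v $ i * w $ i))"
      by (rule sum.cong[OF refl]) (simp only: inner lessThan_iff, simp add: distrib_left mult_ac)
    then show ?thesis
      by (simp add: sum.distrib sum_distrib_left)
  qed
  also have "\<dots> = v \<bullet> (Kmat k xs t *\<^sub>v w) + \<sigma>\<^sup>2 * (v \<bullet> w)"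
    using assms by (simp add: scalar_prod_def atLeast0LessThan Kmat_def Matrix.row_def)
  finally show ?thesis .
qed

lemma quadA:
  assumes "v \<in> carrier_vec t"
  shows "v \<bullet> (Amat k \<sigma> xs t *\<^sub>v v) = ip k (gl xs t v) (gl xs t v) + \<sigma>\<^sup>2 * (v \<bullet> v)"
  using assms by (simp add: bilinA ip_gl)

lemma A_pd: assumes "v \<in> carrier_vec t" "v \<noteq> 0\<^sub>v t" shows "v \<bullet> (Amat k \<sigma> xs t *\<^sub>v v) > 0"
proof -
  have "ip k (gl xs t v) (gl xs t v) \<ge> 0" by (rule ip_psd[OF ker set_gl[OF pts]])
  moreover have "v \<bullet> v > 0" by (rule scalar_self_pos[OF assms])
  moreover have "\<sigma>\<^sup>2 > 0" using sig by simp
  ultimately show ?thesis unfolding quadA[OF assms(1)] by (simp add: add_nonneg_pos)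
qed

lemma A_psd: "v \<in> carrier_vec t \<Longrightarrow> v \<bullet> (Amat k \<sigma> xs t *\<^sub>v v) \<ge> 0"
proof (cases "v = 0\<^sub>v t")
  case True
  assume "v \<in> carrier_vec t"
  have "Amat k \<sigma> xs t *\<^sub>v 0\<^sub>v t \<in> carrier_vec t" by (rule mult_mat_vec_carrier[OF Amat_carrier]) simp
  then show ?thesis using True by (simp add: scalar_prod_left_zero)
next
  case False
  assume "v \<in> carrier_vec t"
  then show ?thesis using A_pd[of v] False by simp
qed

lemma A_det: "det (Amat k \<sigma> xs t) \<noteq> 0"
proof
  assume "det (Amat k \<sigma> xs t) = 0"
  then obtain v where v: "v \<in> carrier_vec t" "v \<noteq> 0\<^sub>v t" "Amat k \<sigma> xs t *\<^sub>v v = 0\<^sub>v t"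
    using det_0_iff_vec_prod_zero_field[OF Amat_carrier] by blast
  have "v \<bullet> (Amat k \<sigma> xs t *\<^sub>v v) = 0" using v by simp
  with A_pd[OF v(1,2)] show False by simp
qed

lemma Ai_exists: "\<exists>B. B \<in> carrier_mat t t \<and> Amat k \<sigma> xs t * B = 1\<^sub>m t \<and> B * Amat k \<sigma> xs t = 1\<^sub>m t"
proof -
  let ?A = "Amat k \<sigma> xs t"
  have U: "?A \<in> Units (ring_mat TYPE(real) t undefined)"
    by (rule det_non_zero_imp_unit[OF Amat_carrier A_det])
  from U[unfolded Units_def ring_mat_def]
  obtain B where "B \<in> carrier_mat t t" "B * ?A = 1\<^sub>m t" "?A * B = 1\<^sub>m t" by auto
  then show ?thesis by blast
qed

lemma Ai_props:
  "inv_mat (Amat k \<sigma> xs t) \<in> carrier_mat t t \<and>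
   Amat k \<sigma> xs t * inv_mat (Amat k \<sigma> xs t) = 1\<^sub>m t \<and>
   inv_mat (Amat k \<sigma> xs t) * Amat k \<sigma> xs t = 1\<^sub>m t"
proof -
  let ?A = "Amat k \<sigma> xs t"
  have d: "dim_row ?A = t" using Amat_carrier[of k \<sigma> xs t] by (simp only: carrier_mat_def mem_Collect_eq)
  show ?thesis unfolding inv_mat_def d
    by (rule someI_ex[OF Ai_exists])
qed

lemma A_sym: "transpose_mat (Amat k \<sigma> xs t) = Amat k \<sigma> xs t"
proof -
  have s: "k (xs (Suc j)) (xs (Suc i)) = k (xs (Suc i)) (xs (Suc j))" if "i < t" "j < t" for i j
    using ker pts that unfolding kernel_on_def by auto
  show ?thesis by (rule eq_matI) (auto simp: Amat_def Kmat_def s)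
qed

lemma Ai_sym: "transpose_mat (inv_mat (Amat k \<sigma> xs t)) = inv_mat (Amat k \<sigma> xs t)"
proof -
  let ?A = "Amat k \<sigma> xs t" and ?B = "inv_mat (Amat k \<sigma> xs t)"
  have B: "?B \<in> carrier_mat t t" "?A * ?B = 1\<^sub>m t" "?B * ?A = 1\<^sub>m t" using Ai_props by auto
  have tm: "transpose_mat (?B * ?A) = transpose_mat ?A * transpose_mat ?B"
    by (rule transpose_mult[OF B(1) Amat_carrier])
  have r: "?A * transpose_mat ?B = 1\<^sub>m t"
    using tm unfolding A_sym B(3) by simp
  have "transpose_mat ?B = (?B * ?A) * transpose_mat ?B" using B by simp
  also have "\<dots> = ?B * (?A * transpose_mat ?B)"
    using B by (intro assoc_mult_mat) auto
  also have "\<dots> = ?B" using r B by simp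
  finally show ?thesis .
qed

lemma Ai_swap:
  assumes "v \<in> carrier_vec t" "w \<in> carrier_vec t"
  shows "v \<bullet> (inv_mat (Amat k \<sigma> xs t) *\<^sub>v w) = (inv_mat (Amat k \<sigma> xs t) *\<^sub>v v) \<bullet> w"
  using transpose_vec_mult_scalar[of "inv_mat (Amat k \<sigma> xs t)" t t w v] Ai_props Ai_sym assms by simp

end


context
  fixes k :: "'a \<Rightarrow> 'a \<Rightarrow> real" and X :: "'a set" and \<sigma> :: real and xs :: "nat \<Rightarrow> 'a" and t :: nat
  assumes ker: "kernel_on k X" and sig: "\<sigma> > 0" and pts: "\<forall>i\<in>{1..t}. xs i \<in> X"
begin

lemma Ai_carrier: "inv_mat (Amat k \<sigma> xs t) \<in> carrier_mat t t"
  using Ai_props[OF ker sig pts] by blast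

lemma post_mean_eq:
  "post_mean k \<sigma> xs ys t x = (inv_mat (Amat k \<sigma> xs t) *\<^sub>v kvec k xs t x) \<bullet> yvec ys t"
  unfolding post_mean_def Amat_def[symmetric]
  by (rule Ai_swap[OF ker sig pts]) auto

lemma post_var_eq:
  "post_var k \<sigma> xs t x = k x x - (inv_mat (Amat k \<sigma> xs t) *\<^sub>v kvec k xs t x) \<bullet> kvec k xs t x"
proof -
  have "kvec k xs t x \<bullet> (inv_mat (Amat k \<sigma> xs t) *\<^sub>v kvec k xs t x)
      = (inv_mat (Amat k \<sigma> xs t) *\<^sub>v kvec k xs t x) \<bullet> kvec k xs t x"
    by (rule comm_scalar_prod[of _ t]) (use Ai_carrier in auto)
  then show ?thesis unfolding post_var_def Amat_def[symmetric] by simp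
qed

lemma A_beta: "Amat k \<sigma> xs t *\<^sub>v (inv_mat (Amat k \<sigma> xs t) *\<^sub>v kvec k xs t x) = kvec k xs t x"
proof -
  have "Amat k \<sigma> xs t *\<^sub>v (inv_mat (Amat k \<sigma> xs t) *\<^sub>v kvec k xs t x)
     = (Amat k \<sigma> xs t * inv_mat (Amat k \<sigma> xs t)) *\<^sub>v kvec k xs t x"
    by (rule assoc_mult_mat_vec[symmetric, OF Amat_carrier Ai_carrier]) simp
  also have "\<dots> = kvec k xs t x" using Ai_props[OF ker sig pts] by simp
  finally show ?thesis .
qed

lemma beta_carrier: "inv_mat (Amat k \<sigma> xs t) *\<^sub>v kvec k xs t x \<in> carrier_vec t"
  by (rule mult_mat_vec_carrier[OF Ai_carrier]) simp

lemma beta_kv_nonneg: "(inv_mat (Amat k \<sigma> xs t) *\<^sub>v kvec k xs t x) \<bullet> kvec k xs t x \<ge> 0"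
  using A_psd[OF ker sig pts beta_carrier[of x]] unfolding A_beta .

lemma post_var_le: "post_var k \<sigma> xs t x \<le> k x x"
  using beta_kv_nonneg unfolding post_var_eq by simp

definition hl :: "'a \<Rightarrow> (real \<times> 'a) list" where
  "hl x = [(1, x)] @ scl (-1) (gl xs t (inv_mat (Amat k \<sigma> xs t) *\<^sub>v kvec k xs t x))"

lemma set_hl: "x \<in> X \<Longrightarrow> set (map snd (hl x)) \<subseteq> X"
  using set_gl[OF pts] unfolding hl_def by auto

lemma hl_norm:
  assumes x: "x \<in> X"
  shows "ip k (hl x) (hl x) \<le> post_var k \<sigma> xs t x"
proof -
  define b where "b = inv_mat (Amat k \<sigma> xs t) *\<^sub>v kvec k xs t x"
  have b: "b \<in> carrier_vec t" unfolding b_def by (rule beta_carrier)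
  define g where "g = gl xs t b"
  have g: "set (map snd g) \<subseteq> X" unfolding g_def by (rule set_gl[OF pts])
  have x1: "set (map snd [(1::real, x)]) \<subseteq> X" using x by simp
  have e1: "ip k [(1, x)] [(1, x)] = k x x" by (simp add: ip_def)
  have e2: "ip k [(1, x)] g = b \<bullet> kvec k xs t x" unfolding g_def by (rule ip_single_gl[OF b])
  have e3: "ip k g [(1, x)] = ip k [(1, x)] g" by (rule ip_sym[OF ker g x1])
  have "ip k g g = b \<bullet> (Kmat k xs t *\<^sub>v b)" unfolding g_def by (rule ip_gl[OF b b])
  also have "\<dots> = b \<bullet> (Amat k \<sigma> xs t *\<^sub>v b) - \<sigma>\<^sup>2 * (b \<bullet> b)"
    using bilinA[OF ker sig pts b b] by simp
  also have "b \<bullet> (Amat k \<sigma> xs t *\<^sub>v b) = b \<bullet> kvec k xs t x"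
    unfolding b_def A_beta ..
  finally have e4: "ip k g g = b \<bullet> kvec k xs t x - \<sigma>\<^sup>2 * (b \<bullet> b)" .
  have "ip k (hl x) (hl x) = k x x - b \<bullet> kvec k xs t x - \<sigma>\<^sup>2 * (b \<bullet> b)"
    unfolding hl_def b_def[symmetric] g_def[symmetric] ip_append_left ip_append_right ip_scl_left ip_scl_right e1 e2 e3 e4
    by simp
  also have "\<dots> \<le> k x x - b \<bullet> kvec k xs t x"
    using scalar_self_nonneg[of b] by simp
  finally show ?thesis unfolding post_var_eq b_def .
qed

lemma post_var_nonneg: "x \<in> X \<Longrightarrow> post_var k \<sigma> xs t x \<ge> 0"
  using hl_norm ip_psd[OF ker set_hl] by fastforce

lemma ip_p_hl:
  assumes x: "x \<in> X" and p: "set (map snd p) \<subseteq> X"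
  shows "ip k p (hl x) = pre_eval k p x
     - (inv_mat (Amat k \<sigma> xs t) *\<^sub>v kvec k xs t x) \<bullet> yvec (\<lambda>i. pre_eval k p (xs i)) t"
proof -
  define b where "b = inv_mat (Amat k \<sigma> xs t) *\<^sub>v kvec k xs t x"
  have b: "b \<in> carrier_vec t" unfolding b_def by (rule beta_carrier)
  define g where "g = gl xs t b"
  have g: "set (map snd g) \<subseteq> X" unfolding g_def by (rule set_gl[OF pts])
  have "ip k p g = ip k g p" by (rule ip_sym[OF ker p g])
  also have "\<dots> = (\<Sum>j<t. b $ j * pre_eval k p (xs (Suc j)))"
    unfolding ip_def g_def pre_eval_def by (simp add: sum_distrib_left mult.assoc)
  also have "\<dots> = b \<bullet> yvec (\<lambda>i. pre_eval k p (xs i)) t"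
    by (simp add: scalar_prod_def yvec_def atLeast0LessThan)
  finally have e: "ip k p g = b \<bullet> yvec (\<lambda>i. pre_eval k p (xs i)) t" .
  show ?thesis
    unfolding hl_def b_def[symmetric] g_def[symmetric] ip_append_right ip_scl_right ip_single_right[OF ker p x] e
    by simp
qed

lemma pre_conf:
  assumes x: "x \<in> X" and p: "set (map snd p) \<subseteq> X"
  shows "\<bar>pre_eval k p x - (inv_mat (Amat k \<sigma> xs t) *\<^sub>v kvec k xs t x) \<bullet> yvec (\<lambda>i. pre_eval k p (xs i)) t\<bar>
     \<le> sqrt (pre_norm_sq k p) * sqrt (post_var k \<sigma> xs t x)"
proof -
  have cs: "(ip k p (hl x))^2 \<le> ip k p p * ip k (hl x) (hl x)"
    by (rule ip_CS[OF ker p set_hl[OF x]])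
  have pp: "ip k p p \<ge> 0" by (rule ip_psd[OF ker p])
  have "ip k p p * ip k (hl x) (hl x) \<le> ip k p p * post_var k \<sigma> xs t x"
    by (rule mult_left_mono[OF hl_norm[OF x] pp])
  with cs have "(ip k p (hl x))^2 \<le> ip k p p * post_var k \<sigma> xs t x" by linarith
  then have "sqrt ((ip k p (hl x))^2) \<le> sqrt (ip k p p * post_var k \<sigma> xs t x)"
    by (rule real_sqrt_le_mono)
  then show ?thesis unfolding ip_p_hl[OF x p] pre_norm_sq_ip by (simp add: real_sqrt_mult)
qed

end


lemma rkhs_conv:
  assumes ker: "kernel_on k X" and f: "in_rkhs k X f"
  shows "rkhs_approx k X f (SOME s. rkhs_approx k X f s) \<and>
    (\<lambda>n. sqrt (pre_norm_sq k ((SOME s. rkhs_approx k X f s) n))) \<longlonglongrightarrow> rkhs_norm k X f"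
proof -
  define s where "s = (SOME s. rkhs_approx k X f s)"
  have s: "rkhs_approx k X f s" unfolding s_def using f unfolding in_rkhs_def by (rule someI_ex)
  define a where "a = (\<lambda>n. sqrt (pre_norm_sq k (s n)))"
  have sub: "set (map snd (s n)) \<subseteq> X" for n using s unfolding rkhs_approx_def by blast
  have "Cauchy a"
  proof (rule metric_CauchyI)
    fix e :: real assume e: "e > 0"
    then have "e^2 > 0" by simp
    then obtain N where N: "\<forall>m\<ge>N. \<forall>n\<ge>N. pre_norm_sq k (pre_diff (s m) (s n)) < e^2"
      using s unfolding rkhs_approx_def by blast
    show "\<exists>M. \<forall>m\<ge>M. \<forall>n\<ge>M. dist (a m) (a n) < e"
    proof (intro exI allI impI)
      fix m n assume mn: "m \<ge> N" "n \<ge> N"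
      have "dist (a m) (a n) \<le> sqrt (pre_norm_sq k (pre_diff (s m) (s n)))"
        unfolding dist_real_def a_def by (rule norm_diff_ge[OF ker sub sub])
      also have "\<dots> < sqrt (e^2)" using N mn by (intro real_sqrt_less_mono) blast
      also have "\<dots> = e" using e by simp
      finally show "dist (a m) (a n) < e" .
    qed
  qed
  then have "convergent a" by (rule Cauchy_convergent)
  then have "a \<longlonglongrightarrow> lim a" by (rule convergent_LIMSEQ_iff[THEN iffD1])
  moreover have "lim a = rkhs_norm k X f" unfolding rkhs_norm_def a_def s_def ..
  ultimately show ?thesis using s unfolding a_def s_def by simp
qed

lemma rkhs_norm_nonneg:
  assumes ker: "kernel_on k X" and f: "in_rkhs k X f"
  shows "rkhs_norm k X f \<ge> 0"
proof -
  have c: "rkhs_approx k X f (SOME s. rkhs_approx k X f s)" and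
    l: "(\<lambda>n. sqrt (pre_norm_sq k ((SOME s. rkhs_approx k X f s) n))) \<longlonglongrightarrow> rkhs_norm k X f"
    using rkhs_conv[OF assms] by auto
  have "pre_norm_sq k ((SOME s. rkhs_approx k X f s) n) \<ge> 0" for n
  proof -
    have "set (map snd ((SOME s. rkhs_approx k X f s) n)) \<subseteq> X" using c unfolding rkhs_approx_def by blast
    then show ?thesis unfolding pre_norm_sq_ip by (rule ip_psd[OF ker])
  qed
  then show ?thesis by (intro LIMSEQ_le_const[OF l]) auto
qed

lemma scalar_yvec: "b \<bullet> yvec ys t = (\<Sum>j<t. b $ j * ys (Suc j))"
  by (simp add: scalar_prod_def yvec_def atLeast0LessThan)

lemma confidence:
  assumes ker: "kernel_on k X" and sig: "\<sigma> > 0" and pts: "\<forall>i\<in>{1..t}. xs i \<in> X"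
    and f: "in_rkhs k X f" and x: "x \<in> X"
  shows "\<bar>f x - post_mean k \<sigma> xs (\<lambda>i. f (xs i)) t x\<bar> \<le> rkhs_norm k X f * sqrt (post_var k \<sigma> xs t x)"
proof -
  define s where "s = (SOME s. rkhs_approx k X f s)"
  have s: "rkhs_approx k X f s" and lim: "(\<lambda>n. sqrt (pre_norm_sq k (s n))) \<longlonglongrightarrow> rkhs_norm k X f"
    using rkhs_conv[OF ker f] unfolding s_def by auto
  have sub: "set (map snd (s n)) \<subseteq> X" for n using s unfolding rkhs_approx_def by blast
  have pt: "\<And>y. y \<in> X \<Longrightarrow> (\<lambda>n. pre_eval k (s n) y) \<longlonglongrightarrow> f y" using s unfolding rkhs_approx_def by blast
  define b where "b = inv_mat (Amat k \<sigma> xs t) *\<^sub>v kvec k xs t x"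
  have pm: "post_mean k \<sigma> xs (\<lambda>i. f (xs i)) t x = (\<Sum>j<t. b $ j * f (xs (Suc j)))"
    unfolding post_mean_eq[OF ker sig pts] b_def[symmetric] scalar_yvec ..
  have l1: "(\<lambda>n. (\<Sum>j<t. b $ j * pre_eval k (s n) (xs (Suc j)))) \<longlonglongrightarrow> (\<Sum>j<t. b $ j * f (xs (Suc j)))"
    by (intro tendsto_sum tendsto_mult_left pt) (use pts in auto)
  have l2: "(\<lambda>n. \<bar>pre_eval k (s n) x - (\<Sum>j<t. b $ j * pre_eval k (s n) (xs (Suc j)))\<bar>)
       \<longlonglongrightarrow> \<bar>f x - post_mean k \<sigma> xs (\<lambda>i. f (xs i)) t x\<bar>"
    unfolding pm by (intro tendsto_rabs tendsto_diff pt[OF x] l1)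
  have l3: "(\<lambda>n. sqrt (pre_norm_sq k (s n)) * sqrt (post_var k \<sigma> xs t x))
       \<longlonglongrightarrow> rkhs_norm k X f * sqrt (post_var k \<sigma> xs t x)"
    by (intro tendsto_mult_right lim)
  show ?thesis
  proof (rule LIMSEQ_le[OF l2 l3], intro exI allI impI)
    fix n
    show "\<bar>pre_eval k (s n) x - (\<Sum>j<t. b $ j * pre_eval k (s n) (xs (Suc j)))\<bar>
        \<le> sqrt (pre_norm_sq k (s n)) * sqrt (post_var k \<sigma> xs t x)"
      using pre_conf[OF ker sig pts x sub[of n]] unfolding b_def[symmetric] scalar_yvec .
  qed
qed



lemma det_step:
  assumes ker: "kernel_on k X" and sig: "\<sigma> > 0" and pts: "\<forall>i\<in>{1..Suc t}. xs i \<in> X"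
  shows "det (Amat k \<sigma> xs (Suc t)) = det (Amat k \<sigma> xs t) * (\<sigma>\<^sup>2 + post_var k \<sigma> xs t (xs (Suc t)))"
proof -
  have pts': "\<forall>i\<in>{1..t}. xs i \<in> X" using pts by auto
  define x' where "x' = xs (Suc t)"
  have x': "x' \<in> X" using pts unfolding x'_def by auto
  define A where "A = Amat k \<sigma> xs t"
  define Ai where "Ai = inv_mat A"
  define kv where "kv = kvec k xs t x'"
  define B where "B = mat t 1 (\<lambda>(i, _). kv $ i)"
  define C where "C = mat 1 t (\<lambda>(_, j). kv $ j)"
  define D where "D = mat 1 1 (\<lambda>_. k x' x' + \<sigma>\<^sup>2)"
  have A: "A \<in> carrier_mat t t" unfolding A_def by simp
  have Ai: "Ai \<in> carrier_mat t t" "A * Ai = 1\<^sub>m t" "Ai * A = 1\<^sub>m t"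
    using Ai_props[OF ker sig pts'] unfolding Ai_def A_def by auto
  have B: "B \<in> carrier_mat t 1" and C: "C \<in> carrier_mat 1 t" and D: "D \<in> carrier_mat 1 1"
    by (auto simp: B_def C_def D_def)
  have symk: "k (xs (Suc i)) x' = k x' (xs (Suc i))" if "i < t" for i
    using ker pts that x' unfolding kernel_on_def x'_def by auto
  have M: "Amat k \<sigma> xs (Suc t) = four_block_mat A B C D"
  proof (rule eq_matI)
    fix i j assume ij: "i < dim_row (four_block_mat A B C D)" "j < dim_col (four_block_mat A B C D)"
    then have ij': "i < Suc t" "j < Suc t" using A D by auto
    show "Amat k \<sigma> xs (Suc t) $$ (i, j) = four_block_mat A B C D $$ (i, j)"
      using ij' symk
      unfolding Amat_eq[OF ker sig pts] A_def Amat_eq[OF ker sig pts'] B_def C_def D_def kv_def kvec_def x'_def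
      by (auto simp: less_Suc_eq)
  qed (use A D in \<open>auto simp: Amat_def Kmat_def\<close>)
  define L where "L = four_block_mat (1\<^sub>m t) (0\<^sub>m t 1) (- (C * Ai)) (1\<^sub>m 1)"
  have CAi: "C * Ai \<in> carrier_mat 1 t" using C Ai by auto
  have L: "L \<in> carrier_mat (Suc t) (Suc t)" unfolding L_def using four_block_carrier_mat[of "1\<^sub>m t" t t "1\<^sub>m 1" 1 1] by simp
  have detL: "det L = 1" unfolding L_def
    by (subst det_four_block_mat_upper_right_zero[of _ t _ 1]) (use CAi in auto)
  define E where "E = - (C * Ai) * B + 1\<^sub>m 1 * D"
  have LM: "L * four_block_mat A B C D = four_block_mat A B (0\<^sub>m 1 t) E"
  proof -
    have "L * four_block_mat A B C D = four_block_mat (1\<^sub>m t * A + 0\<^sub>m t 1 * C) (1\<^sub>m t * B + 0\<^sub>m t 1 * D)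
        (- (C * Ai) * A + 1\<^sub>m 1 * C) (- (C * Ai) * B + 1\<^sub>m 1 * D)"
      unfolding L_def by (rule mult_four_block_mat) (use A B C D CAi in auto)
    also have "1\<^sub>m t * A + 0\<^sub>m t 1 * C = A" using A C by simp
    also have "1\<^sub>m t * B + 0\<^sub>m t 1 * D = B" using B D by simp
    also have "- (C * Ai) * A + 1\<^sub>m 1 * C = 0\<^sub>m 1 t"
    proof -
      have "- (C * Ai) * A = - (C * Ai * A)" by (rule uminus_mult_left_mat) (use CAi A in auto)
      also have "C * Ai * A = C * (Ai * A)" using C Ai A by (simp add: assoc_mult_mat)
      also have "\<dots> = C" using Ai C by simp
      finally show ?thesis using C by (simp add: uminus_l_inv_mat)
    qed
    finally show ?thesis unfolding E_def .
  qed
  have E: "E \<in> carrier_mat 1 1" unfolding E_def using CAi B D by auto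
  have CAi_idx: "(C * Ai) $$ (0, j) = (\<Sum>l<t. kv $ l * Ai $$ (l, j))" if "j < t" for j
    using C Ai that by (simp add: C_def Matrix.row_def col_def scalar_prod_def atLeast0LessThan)
  have "(C * Ai * B) $$ (0, 0) = (\<Sum>j<t. (C * Ai) $$ (0, j) * kv $ j)"
    using carrier_matD[OF CAi] by (simp add: B_def index_mult_mat Matrix.row_def col_def scalar_prod_def atLeast0LessThan)
  also have "\<dots> = (\<Sum>j<t. (\<Sum>l<t. kv $ l * Ai $$ (l, j)) * kv $ j)"
    by (rule sum.cong) (simp_all add: CAi_idx)
  also have "\<dots> = (\<Sum>l<t. kv $ l * (\<Sum>j<t. Ai $$ (l, j) * kv $ j))"
    by (simp add: sum_distrib_left sum_distrib_right mult.assoc) (rule sum.swap)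
  also have "\<dots> = kv \<bullet> (Ai *\<^sub>v kv)"
    using Ai by (simp add: kv_def kvec_def Matrix.row_def scalar_prod_def atLeast0LessThan)
  finally have CAiB: "(C * Ai * B) $$ (0, 0) = kv \<bullet> (Ai *\<^sub>v kv)" .
  have "E $$ (0, 0) = k x' x' + \<sigma>\<^sup>2 - kv \<bullet> (Ai *\<^sub>v kv)"
  proof -
    have "- (C * Ai) * B = - (C * Ai * B)" by (rule uminus_mult_left_mat) (use CAi B in auto)
    then show ?thesis using CAi B D CAiB carrier_matD[OF mult_carrier_mat[OF CAi B]] by (simp add: E_def D_def)
  qed
  also have "\<dots> = \<sigma>\<^sup>2 + post_var k \<sigma> xs t (xs (Suc t))"
    unfolding post_var_def Amat_def[symmetric] by (simp add: Ai_def A_def kv_def x'_def)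
  finally have detE: "det E = \<sigma>\<^sup>2 + post_var k \<sigma> xs t (xs (Suc t))"
    using det_single[OF E] by simp
  have "det L * det (Amat k \<sigma> xs (Suc t)) = det (L * Amat k \<sigma> xs (Suc t))"
    by (rule det_mult[symmetric, OF L]) simp
  also have "\<dots> = det (four_block_mat A B (0\<^sub>m 1 t) E)" unfolding M LM ..
  also have "\<dots> = det A * det E"
    by (rule det_four_block_mat_lower_left_zero[OF A B refl E])
  finally show ?thesis using detL detE unfolding A_def by simp
qed



lemma det_prod:
  assumes ker: "kernel_on k X" and sig: "\<sigma> > 0" and pts: "\<forall>i\<in>{1..T}. xs i \<in> X"
  shows "det (Amat k \<sigma> xs T) = (\<Prod>t<T. \<sigma>\<^sup>2 + post_var k \<sigma> xs t (xs (Suc t)))"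
  using pts
proof (induction T)
  case 0
  have "Amat k \<sigma> xs 0 = 1\<^sub>m 0" by (rule eq_matI) (auto simp: Amat_def Kmat_def)
  then show ?case by simp
next
  case (Suc T)
  have "\<forall>i\<in>{1..T}. xs i \<in> X" using Suc.prems by auto
  then show ?case using det_step[OF ker sig Suc.prems] Suc.IH by simp
qed

lemma post_var_bounds:
  assumes ker: "kernel_on k X" and sig: "\<sigma> > 0" and pts: "\<forall>i\<in>{1..Suc t}. xs i \<in> X"
    and k1: "\<forall>x\<in>X. \<forall>y\<in>X. k x y \<le> 1"
  shows "0 \<le> post_var k \<sigma> xs t (xs (Suc t)) \<and> post_var k \<sigma> xs t (xs (Suc t)) \<le> 1"
proof -
  have pts': "\<forall>i\<in>{1..t}. xs i \<in> X" using pts by auto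
  have x: "xs (Suc t) \<in> X" using pts by auto
  show ?thesis using post_var_nonneg[OF ker sig pts' x] post_var_le[OF ker sig pts', of "xs (Suc t)"] k1 x
    by fastforce
qed

lemma logdet:
  assumes ker: "kernel_on k X" and sig: "\<sigma> > 0" and pts: "\<forall>i\<in>{1..T}. xs i \<in> X"
    and k1: "\<forall>x\<in>X. \<forall>y\<in>X. k x y \<le> 1"
  shows "ln (det (1\<^sub>m T + (1 / \<sigma>\<^sup>2) \<cdot>\<^sub>m Kmat k xs T))
     = (\<Sum>t<T. ln (1 + post_var k \<sigma> xs t (xs (Suc t)) / \<sigma>\<^sup>2))"
proof -
  have s2: "\<sigma>\<^sup>2 > 0" using sig by simp
  have eq: "1\<^sub>m T + (1 / \<sigma>\<^sup>2) \<cdot>\<^sub>m Kmat k xs T = (1 / \<sigma>\<^sup>2) \<cdot>\<^sub>m Amat k \<sigma> xs T"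
    by (rule eq_matI) (use s2 in \<open>auto simp: Amat_def Kmat_def field_simps\<close>)
  have "det (1\<^sub>m T + (1 / \<sigma>\<^sup>2) \<cdot>\<^sub>m Kmat k xs T) = (1 / \<sigma>\<^sup>2) ^ T * det (Amat k \<sigma> xs T)"
    unfolding eq det_smult by (simp add: Amat_def Kmat_def)
  also have "\<dots> = (\<Prod>t<T. 1 + post_var k \<sigma> xs t (xs (Suc t)) / \<sigma>\<^sup>2)"
  proof -
    have "(1 / \<sigma>\<^sup>2) ^ T * (\<Prod>t<T. \<sigma>\<^sup>2 + post_var k \<sigma> xs t (xs (Suc t)))
        = (\<Prod>t<T. (1 / \<sigma>\<^sup>2) * (\<sigma>\<^sup>2 + post_var k \<sigma> xs t (xs (Suc t))))"
      by (simp only: prod.distrib prod_constant card_lessThan)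
    also have "\<dots> = (\<Prod>t<T. 1 + post_var k \<sigma> xs t (xs (Suc t)) / \<sigma>\<^sup>2)"
      by (rule prod.cong) (use s2 in \<open>auto simp: field_simps\<close>)
    finally show ?thesis unfolding det_prod[OF ker sig pts] .
  qed
  finally have d: "det (1\<^sub>m T + (1 / \<sigma>\<^sup>2) \<cdot>\<^sub>m Kmat k xs T) = (\<Prod>t<T. 1 + post_var k \<sigma> xs t (xs (Suc t)) / \<sigma>\<^sup>2)" .
  have pos: "1 + post_var k \<sigma> xs t (xs (Suc t)) / \<sigma>\<^sup>2 > 0" if "t < T" for t
  proof -
    have "\<forall>i\<in>{1..Suc t}. xs i \<in> X" using pts that by auto
    then have "post_var k \<sigma> xs t (xs (Suc t)) \<ge> 0" using post_var_bounds[OF ker sig _ k1] by blast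
    then show ?thesis using s2 by (simp add: add_pos_nonneg)
  qed
  show ?thesis unfolding d by (rule ln_prod) (use pos in force)+
qed

lemma concave_ln:
  fixes s a :: real
  assumes "0 \<le> s" "s \<le> 1" "a > 0"
  shows "s * ln (1 + a) \<le> ln (1 + a * s)"
proof (cases "s = 0")
  case True then show ?thesis by simp
next
  case False
  have "(1 + a) powr s * 1 powr (1 - s) \<le> s * (1 + a) + (1 - s) * 1"
    by (rule Youngs_inequality_0) (use assms in auto)
  then have le: "(1 + a) powr s \<le> 1 + a * s" by (simp add: algebra_simps)
  have "s * ln (1 + a) = ln ((1 + a) powr s)" using assms by (simp add: ln_powr)
  also have "\<dots> \<le> ln (1 + a * s)"
  proof -
    have p: "0 < 1 + a * s" using assms by (simp add: add_pos_nonneg)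
    show ?thesis using le p assms by (subst ln_le_cancel_iff) auto
  qed
  finally show ?thesis .
qed

lemma info_gain_ge:
  assumes ker: "kernel_on k X" and sig: "\<sigma> > 0" and pts: "\<forall>i\<in>{1..T}. xs i \<in> X"
    and k1: "\<forall>x\<in>X. \<forall>y\<in>X. k x y \<le> 1"
  shows "1/2 * ln (det (1\<^sub>m T + (1 / \<sigma>\<^sup>2) \<cdot>\<^sub>m Kmat k xs T)) \<le> info_gain k \<sigma> X T"
proof -
  let ?g = "\<lambda>xs. 1/2 * ln (det (1\<^sub>m T + (1 / \<sigma>\<^sup>2) \<cdot>\<^sub>m Kmat k xs T))"
  have bnd: "?g ys \<le> T / 2 * ln (1 + 1 / \<sigma>\<^sup>2)" if ys: "ys \<in> {xs :: nat \<Rightarrow> _. \<forall>i\<in>{1..T}. xs i \<in> X}" for ys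
  proof -
    have p: "\<forall>i\<in>{1..T}. ys i \<in> X" using ys by auto
    have "(\<Sum>t<T. ln (1 + post_var k \<sigma> ys t (ys (Suc t)) / \<sigma>\<^sup>2)) \<le> (\<Sum>t<T. ln (1 + 1 / \<sigma>\<^sup>2))"
    proof (rule sum_mono)
      fix t assume "t \<in> {..<T}"
      then have "\<forall>i\<in>{1..Suc t}. ys i \<in> X" using p by auto
      from post_var_bounds[OF ker sig this k1]
      have b: "0 \<le> post_var k \<sigma> ys t (ys (Suc t))" "post_var k \<sigma> ys t (ys (Suc t)) \<le> 1" by auto
      have "post_var k \<sigma> ys t (ys (Suc t)) / \<sigma>\<^sup>2 \<le> 1 / \<sigma>\<^sup>2"
        using b sig by (simp add: divide_right_mono)
      then show "ln (1 + post_var k \<sigma> ys t (ys (Suc t)) / \<sigma>\<^sup>2) \<le> ln (1 + 1 / \<sigma>\<^sup>2)"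
        using b sig by (subst ln_le_cancel_iff) (auto intro: add_pos_nonneg)
    qed
    then show ?thesis unfolding logdet[OF ker sig p k1] by simp
  qed
  have "bdd_above (?g ` {xs :: nat \<Rightarrow> _. \<forall>i\<in>{1..T}. xs i \<in> X})"
    using bnd by (intro bdd_aboveI2) 
  then show ?thesis unfolding info_gain_def
    by (rule cSUP_upper[rotated]) (use pts in auto)
qed



lemma sum_shift1: "(\<Sum>t=1..T. h t) = (\<Sum>t<T. h (Suc t) :: real)"
  by (induction T) (auto simp: sum.atLeast_Suc_atMost)

theorem corollary5:
  fixes X :: "'d::euclidean_space set"
    and k :: "'d \<Rightarrow> 'd \<Rightarrow> real"
    and f :: "'d \<Rightarrow> real"
    and \<sigma> :: real
    and xs :: "nat \<Rightarrow> 'd"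
    and xstar :: 'd
    and T :: nat
  assumes "compact X"
    and "kernel_on k X"
    and "\<forall>x\<in>X. \<forall>y\<in>X. k x y \<le> 1"
    and "\<sigma> > 0"
    and "in_rkhs k X f"
    and "xstar \<in> X" and "\<forall>x\<in>X. f x \<le> f xstar"
    and "T \<ge> 1"
    and "\<forall>t\<in>{1..T}. xs t \<in> X \<and>
           (\<forall>x\<in>X. post_mean k \<sigma> xs (\<lambda>i. f (xs i)) (t - 1) x
                     + rkhs_norm k X f * sqrt (post_var k \<sigma> xs (t - 1) x)
                   \<le> post_mean k \<sigma> xs (\<lambda>i. f (xs i)) (t - 1) (xs t)
                     + rkhs_norm k X f * sqrt (post_var k \<sigma> xs (t - 1) (xs t)))"
    and "inj_on xs {1..T}"
  shows "((\<Sum>t=1..T. f xstar - f (xs t))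
           \<le> rkhs_norm k X f * sqrt (T * (8 / ln (1 + 1 / \<sigma>\<^sup>2)) * info_gain k \<sigma> X T)
             + 2 * T * rkhs_norm k X f * \<sigma>) \<and>
         (f xstar - (MAX t\<in>{1..T}. f (xs t))
           \<le> rkhs_norm k X f * sqrt ((8 / ln (1 + 1 / \<sigma>\<^sup>2)) * info_gain k \<sigma> X T / T)
             + 2 * rkhs_norm k X f * \<sigma>)"
proof -
  note ker = assms(2) and k1 = assms(3) and sig = assms(4) and f = assms(5)
    and xst = assms(6) and T1 = assms(8) and alg = assms(9)
  define B where "B = rkhs_norm k X f"
  define L where "L = ln (1 + 1 / \<sigma>\<^sup>2)"
  define \<gamma> where "\<gamma> = info_gain k \<sigma> X T"
  define v where "v = (\<lambda>t. post_var k \<sigma> xs t (xs (Suc t)))"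
  have B0: "B \<ge> 0" unfolding B_def by (rule rkhs_norm_nonneg[OF ker f])
  have s2: "\<sigma>\<^sup>2 > 0" using sig by simp
  have L0: "L > 0" unfolding L_def by (rule ln_gt_zero) (use s2 in simp)
  have ptsT: "\<forall>i\<in>{1..T}. xs i \<in> X" using alg by auto
  have ptsS: "\<forall>i\<in>{1..Suc t}. xs i \<in> X" if "t < T" for t using ptsT that by auto
  have ptst: "\<forall>i\<in>{1..t}. xs i \<in> X" if "t < T" for t using ptsT that by auto
  have vb: "0 \<le> v t \<and> v t \<le> 1" if "t < T" for t
    unfolding v_def by (rule post_var_bounds[OF ker sig ptsS[OF that] k1])
  have round: "f xstar - f (xs (Suc t)) \<le> 2 * B * sqrt (v t)" if t: "t < T" for t
  proof -
    have sel: "\<forall>x\<in>X. post_mean k \<sigma> xs (\<lambda>i. f (xs i)) t x + B * sqrt (post_var k \<sigma> xs t x)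
        \<le> post_mean k \<sigma> xs (\<lambda>i. f (xs i)) t (xs (Suc t)) + B * sqrt (v t)"
      and xt: "xs (Suc t) \<in> X"
      using alg[rule_format, of "Suc t"] t unfolding B_def v_def by auto
    have c1: "\<bar>f xstar - post_mean k \<sigma> xs (\<lambda>i. f (xs i)) t xstar\<bar> \<le> B * sqrt (post_var k \<sigma> xs t xstar)"
      unfolding B_def by (rule confidence[OF ker sig ptst[OF t] f xst])
    have c2: "\<bar>f (xs (Suc t)) - post_mean k \<sigma> xs (\<lambda>i. f (xs i)) t (xs (Suc t))\<bar> \<le> B * sqrt (v t)"
      unfolding B_def v_def by (rule confidence[OF ker sig ptst[OF t] f xt])
    show ?thesis using c1 c2 sel[rule_format, OF xst] by linarith
  qed
  have R1: "(\<Sum>t=1..T. f xstar - f (xs t)) \<le> 2 * B * (\<Sum>t<T. sqrt (v t))"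
    unfolding sum_shift1 sum_distrib_left by (rule sum_mono) (use round in auto)
  have "(\<Sum>t<T. 1 * sqrt (v t))\<^sup>2 \<le> (\<Sum>t<T. 1\<^sup>2) * (\<Sum>t<T. (sqrt (v t))\<^sup>2)"
    by (rule Cauchy_Schwarz_ineq_sum)
  also have "(\<Sum>t<T. (sqrt (v t))\<^sup>2) = (\<Sum>t<T. v t)"
    by (rule sum.cong) (use vb in auto)
  finally have cs: "(\<Sum>t<T. sqrt (v t))\<^sup>2 \<le> T * (\<Sum>t<T. v t)" by simp
  have sq0: "(\<Sum>t<T. sqrt (v t)) \<ge> 0" by (rule sum_nonneg) (use vb in auto)
  have R2: "(\<Sum>t<T. sqrt (v t)) \<le> sqrt (T * (\<Sum>t<T. v t))"
    using real_sqrt_le_mono[OF cs] sq0 by simp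
  have "(\<Sum>t<T. v t * L) \<le> (\<Sum>t<T. ln (1 + v t / \<sigma>\<^sup>2))"
  proof (rule sum_mono)
    fix t assume "t \<in> {..<T}"
    then have b: "0 \<le> v t" "v t \<le> 1" using vb by auto
    have "v t * ln (1 + 1 / \<sigma>\<^sup>2) \<le> ln (1 + (1 / \<sigma>\<^sup>2) * v t)"
      by (rule concave_ln) (use b s2 in auto)
    then show "v t * L \<le> ln (1 + v t / \<sigma>\<^sup>2)" unfolding L_def by simp
  qed
  also have "\<dots> = ln (det (1\<^sub>m T + (1 / \<sigma>\<^sup>2) \<cdot>\<^sub>m Kmat k xs T))"
    unfolding logdet[OF ker sig ptsT k1] v_def ..
  also have "\<dots> \<le> 2 * \<gamma>" using info_gain_ge[OF ker sig ptsT k1] unfolding \<gamma>_def by simp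
  finally have "(\<Sum>t<T. v t) * L \<le> 2 * \<gamma>" by (simp add: sum_distrib_right)
  then have sv: "(\<Sum>t<T. v t) \<le> 2 * \<gamma> / L" using L0 by (simp add: field_simps)
  have "sqrt (T * (\<Sum>t<T. v t)) \<le> sqrt (T * (2 * \<gamma> / L))"
    by (rule real_sqrt_le_mono, rule mult_left_mono[OF sv]) simp
  with R1 R2 B0 have R3: "(\<Sum>t=1..T. f xstar - f (xs t)) \<le> 2 * B * sqrt (T * (2 * \<gamma> / L))"
    by (meson dual_order.trans mult_left_mono zero_le_mult_iff zero_le_numeral)
  have e: "2 * sqrt (T * (2 * \<gamma> / L)) = sqrt (T * (8 / L) * \<gamma>)"
  proof -
    have "T * (8 / L) * \<gamma> = 4 * (T * (2 * \<gamma> / L))" by (simp add: field_simps)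
    then have "sqrt (T * (8 / L) * \<gamma>) = sqrt (4 * (T * (2 * \<gamma> / L)))" by (rule arg_cong)
    also have "\<dots> = 2 * sqrt (T * (2 * \<gamma> / L))" by (simp only: real_sqrt_mult real_sqrt_four)
    finally show ?thesis by simp
  qed
  have R: "(\<Sum>t=1..T. f xstar - f (xs t)) \<le> B * sqrt (T * (8 / L) * \<gamma>)"
  proof -
    have eq2: "2 * B * sqrt (T * (2 * \<gamma> / L)) = B * sqrt (T * (8 / L) * \<gamma>)"
      unfolding e[symmetric] by (simp only: mult_ac)
    show ?thesis using R3 eq2 by linarith
  qed
  have slack: "0 \<le> 2 * real T * B * \<sigma>" using B0 sig by simp
  define M where "M = (MAX t\<in>{1..T}. f (xs t))"
  have Mge: "f (xs t) \<le> M" if "t \<in> {1..T}" for t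
    unfolding M_def by (rule Max_ge) (use that in auto)
  have "(\<Sum>t=1..T. f xstar - M) \<le> (\<Sum>t=1..T. f xstar - f (xs t))"
    by (rule sum_mono) (use Mge in auto)
  then have TM: "T * (f xstar - M) \<le> B * sqrt (T * (8 / L) * \<gamma>)" using R by simp
  have Tpos: "real T > 0" using T1 by simp
  have sq: "sqrt (T * (8 / L) * \<gamma>) = T * sqrt ((8 / L) * \<gamma> / T)"
  proof -
    have "T * (8 / L) * \<gamma> = (real T)\<^sup>2 * ((8 / L) * \<gamma> / T)" using Tpos by (simp add: field_simps power2_eq_square)
    then have "sqrt (T * (8 / L) * \<gamma>) = sqrt ((real T)\<^sup>2 * ((8 / L) * \<gamma> / T))" by (rule arg_cong)
    also have "\<dots> = sqrt ((real T)\<^sup>2) * sqrt ((8 / L) * \<gamma> / T)" by (rule real_sqrt_mult)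
    also have "sqrt ((real T)\<^sup>2) = T" by simp
    finally show ?thesis .
  qed
  have "T * (f xstar - M) \<le> T * (B * sqrt ((8 / L) * \<gamma> / T))"
    using TM unfolding sq by (simp add: mult_ac)
  then have S: "f xstar - M \<le> B * sqrt ((8 / L) * \<gamma> / T)" using Tpos by simp
  have slack2: "0 \<le> 2 * B * \<sigma>" using B0 sig by simp
  show ?thesis
    unfolding B_def[symmetric] L_def[symmetric] \<gamma>_def[symmetric] M_def[symmetric]
    using R S slack slack2 by linarith
qed


end
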